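(* Let $\beta_\bullet\in\{\beta,\beta_v\}$ and let $N$ be $\to_{\beta_\bullet}$-normal. For every term $M$: $M\to_{\beta_\bullet}^*N$ if and only if $M\rightsquigarrow_{pd}^*N$.
   Context: Terms $\Lambda_{\mathcal O}$: $M::=x\mid\lambda x.M\mid MM\mid\mathsf{op}(M,\dots,M)$ with $\mathsf{op}$ in a (possibly empty) set $\mathcal O$ of operator symbols with fixed arities; values $V::=x\mid\lambda x.M$. Rules $(\lambda x.M)N\mapsto_\beta M\{N/x\}$, $(\lambda x.M)V\mapsto_{\beta_v}M\{V/x\}$; $\to=\to_{\beta_\bullet}$ is the closure under all contexts (including under $\lambda$ and operators). Surface reduction $\to_s$: for $\beta$, closure of $\beta$ under head contexts $H::=[\,]\mid\lambda x.H\mid HM$; for $\beta_v$, closure of $\beta_v$ under weak contexts $W::=[\,]\mid WM\mid MW$. Parallel reduction $\rightsquigarrow_{pd}$: (1) if $M\to_sM'$ then $M\rightsquigarrow_{pd}M'$; (2) if $M$ is $\to$-normal then $M\rightsquigarrow_{pd}M$; (3) otherwise (M is $\to_s$-normal but not $\to$-normal): $\lambda x.P\rightsquigarrow_{pd}\lambda x.P'$ if $P\rightsquigarrow_{pd}P'$; $P_1P_2\rightsquigarrow_{pd}P_1'P_2'$ if $P_1\rightsquigarrow_{pd}P_1'$ and $P_2\rightsquigarrow_{pd}P_2'$; $\mathsf{op}(P_1,\dots,P_k)\rightsquigarrow_{pd}\mathsf{op}(P_1',\dots,P_k')$ if $P_i\rightsquigarrow_{pd}P_i'$ for all $i$. 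*)

theory Defs
  imports Main
begin

datatype 'o trm = Var nat | Lam "'o trm" | App "'o trm" "'o trm" | Op 'o "'o trm list"

primrec lift :: "nat \<Rightarrow> 'o trm \<Rightarrow> 'o trm" where
  "lift k (Var i) = (if i < k then Var i else Var (Suc i))"
| "lift k (Lam t) = Lam (lift (Suc k) t)"
| "lift k (App t u) = App (lift k t) (lift k u)"
| "lift k (Op f ts) = Op f (map (lift k) ts)"

text \<open>subst t k s: capture-avoiding substitution of s for index k in t (indices above k decremented).\<close>
primrec subst :: "'o trm \<Rightarrow> nat \<Rightarrow> 'o trm \<Rightarrow> 'o trm" where
  "subst (Var i) k s = (if k < i then Var (i - 1) else if i = k then s else Var i)"
| "subst (Lam t) k s = Lam (subst t (Suc k) (lift 0 s))"
| "subst (App t u) k s = App (subst t k s) (subst u k s)"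
| "subst (Op f ts) k s = Op f (map (\<lambda>t. subst t k s) ts)"

fun is_value :: "'o trm \<Rightarrow> bool" where
  "is_value (Var _) = True"
| "is_value (Lam _) = True"
| "is_value _ = False"

datatype calculus = Beta | BetaV

inductive root :: "calculus \<Rightarrow> 'o trm \<Rightarrow> 'o trm \<Rightarrow> bool" where
  beta: "root Beta (App (Lam M) N) (subst M 0 N)"
| betav: "is_value V \<Longrightarrow> root BetaV (App (Lam M) V) (subst M 0 V)"

inductive step :: "calculus \<Rightarrow> 'o trm \<Rightarrow> 'o trm \<Rightarrow> bool" where
  st_root: "root b M M' \<Longrightarrow> step b M M'"
| st_lam: "step b M M' \<Longrightarrow> step b (Lam M) (Lam M')"
| st_appl: "step b M M' \<Longrightarrow> step b (App M N) (App M' N)"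
| st_appr: "step b N N' \<Longrightarrow> step b (App M N) (App M N')"
| st_op: "step b M M' \<Longrightarrow> step b (Op f (xs @ M # ys)) (Op f (xs @ M' # ys))"

text \<open>Surface reduction: head contexts for beta, weak contexts for beta_v.\<close>
inductive surf :: "calculus \<Rightarrow> 'o trm \<Rightarrow> 'o trm \<Rightarrow> bool" where
  s_root: "root b M M' \<Longrightarrow> surf b M M'"
| s_lam: "surf Beta M M' \<Longrightarrow> surf Beta (Lam M) (Lam M')"
| s_appl: "surf b M M' \<Longrightarrow> surf b (App M N) (App M' N)"
| s_appr: "surf BetaV N N' \<Longrightarrow> surf BetaV (App M N) (App M N')"

definition normal :: "calculus \<Rightarrow> 'o trm \<Rightarrow> bool" where
  "normal b M \<longleftrightarrow> (\<nexists>M'. step b M M')"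

definition surf_normal :: "calculus \<Rightarrow> 'o trm \<Rightarrow> bool" where
  "surf_normal b M \<longleftrightarrow> (\<nexists>M'. surf b M M')"

inductive pd :: "calculus \<Rightarrow> 'o trm \<Rightarrow> 'o trm \<Rightarrow> bool" where
  pd_surf: "surf b M M' \<Longrightarrow> pd b M M'"
| pd_nf: "normal b M \<Longrightarrow> pd b M M"
| pd_lam: "surf_normal b (Lam P) \<Longrightarrow> \<not> normal b (Lam P) \<Longrightarrow> pd b P P'
           \<Longrightarrow> pd b (Lam P) (Lam P')"
| pd_app: "surf_normal b (App P1 P2) \<Longrightarrow> \<not> normal b (App P1 P2) \<Longrightarrow> pd b P1 P1'
           \<Longrightarrow> pd b P2 P2' \<Longrightarrow> pd b (App P1 P2) (App P1' P2')"
| pd_op: "surf_normal b (Op f Ps) \<Longrightarrow> \<not> normal b (Op f Ps) \<Longrightarrow> list_all2 (pd b) Ps Ps'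
           \<Longrightarrow> pd b (Op f Ps) (Op f Ps')"

end

theory Submission
  imports Defs
begin

lemma lift_lift: "i \<le> k \<Longrightarrow> lift (Suc k) (lift i t) = lift i (lift k t)"
  by (induction t arbitrary: i k) auto

lemma lift_subst [simp]: "j \<le> i \<Longrightarrow> lift i (subst t j s) = subst (lift (Suc i) t) j (lift i s)"
  by (induction t arbitrary: i j s) (auto simp: lift_lift)

lemma lift_subst_lt: "i \<le> j \<Longrightarrow> lift i (subst t j s) = subst (lift i t) (Suc j) (lift i s)"
  by (induction t arbitrary: i j s) (auto simp: lift_lift)

lemma subst_lift [simp]: "subst (lift k t) k s = t"
  by (induction t arbitrary: k s) (auto simp: map_idI)

lemma subst_subst: "i \<le> j \<Longrightarrow> subst (subst t (Suc j) (lift i v)) i (subst u j v) = subst (subst t i u) j v"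
  by (induction t arbitrary: i j u v) (auto simp: lift_lift [symmetric] lift_subst_lt)

inductive par :: "calculus \<Rightarrow> 'o trm \<Rightarrow> 'o trm \<Rightarrow> bool" for b where
  p_var: "par b (Var i) (Var i)"
| p_lam: "par b M M' \<Longrightarrow> par b (Lam M) (Lam M')"
| p_app: "par b M M' \<Longrightarrow> par b N N' \<Longrightarrow> par b (App M N) (App M' N')"
| p_op: "list_all2 (par b) Ms Ms' \<Longrightarrow> par b (Op f Ms) (Op f Ms')"
| p_beta: "par b M M' \<Longrightarrow> par b N N' \<Longrightarrow> b = Beta \<or> is_value N \<Longrightarrow> par b (App (Lam M) N) (subst M' 0 N')"

inductive pint :: "calculus \<Rightarrow> 'o trm \<Rightarrow> 'o trm \<Rightarrow> bool" where
  i_var: "pint b (Var i) (Var i)"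
| i_lamB: "pint Beta M M' \<Longrightarrow> pint Beta (Lam M) (Lam M')"
| i_lamV: "par BetaV M M' \<Longrightarrow> pint BetaV (Lam M) (Lam M')"
| i_appB: "pint Beta M M' \<Longrightarrow> par Beta N N' \<Longrightarrow> pint Beta (App M N) (App M' N')"
| i_appV: "pint BetaV M M' \<Longrightarrow> pint BetaV N N' \<Longrightarrow> pint BetaV (App M N) (App M' N')"
| i_op: "list_all2 (par b) Ms Ms' \<Longrightarrow> pint b (Op f Ms) (Op f Ms')"

lemma is_value_lift [simp]: "is_value (lift k t) = is_value t"
  by (cases t) auto

lemma is_value_subst: "is_value t \<Longrightarrow> is_value s \<Longrightarrow> is_value (subst t k s)"
  by (cases t) auto

lemma par_refl: "par b M M"
  by (induction M) (auto intro: par.intros list.rel_refl_strong)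

lemma par_lift: "par b M M' \<Longrightarrow> par b (lift k M) (lift k M')"
proof (induction arbitrary: k rule: par.induct)
  case (p_op Ms Ms' f)
  then show ?case by (auto intro!: par.intros simp: list.rel_map elim!: list_all2_mono)
next
  case (p_beta M M' N N')
  then show ?case using par.p_beta[of b "lift (Suc k) M" "lift (Suc k) M'" "lift k N" "lift k N'"] by auto
qed (auto intro: par.intros)

lemma par_subst: "par b M M' \<Longrightarrow> par b N N' \<Longrightarrow> b = Beta \<or> is_value N \<Longrightarrow> par b (subst M k N) (subst M' k N')"
proof (induction arbitrary: k N N' rule: par.induct)
  case (p_var i)
  then show ?case by (auto intro: par.intros)
next
  case (p_lam M M')
  then show ?case by (simp add: par.p_lam par_lift)
next
  case (p_app M M' N N')
  then show ?case by (auto intro!: par.intros)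
next
  case (p_op Ms Ms' f)
  then show ?case by (auto intro!: par.intros simp: list.rel_map elim!: list_all2_mono)
next
  case (p_beta M M' Q Q' k N N')
  have "par b (App (Lam (subst M (Suc k) (lift 0 N))) (subst Q k N))
     (subst (subst M' (Suc k) (lift 0 N')) 0 (subst Q' k N'))"
    apply (rule par.p_beta)
      apply (rule p_beta.IH(1))
    using p_beta by (auto intro: par_lift is_value_subst)
  then show ?case by (simp add: subst_subst[of 0 k, simplified])
qed

lemma pint_par: "pint b M M' \<Longrightarrow> par b M M'"
  by (induction rule: pint.induct) (auto intro: par.intros)

lemma pint_lift: "pint b M M' \<Longrightarrow> pint b (lift k M) (lift k M')"
proof (induction arbitrary: k rule: pint.induct)
  case (i_op b Ms Ms' f)
  then show ?case by (auto intro!: pint.intros simp: list.rel_map elim!: list_all2_mono intro: par_lift)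
qed (auto intro: pint.intros par_lift)

lemma root_lift: "root b M M' \<Longrightarrow> root b (lift k M) (lift k M')"
  by (induction rule: root.induct) (auto intro: root.intros[simplified] simp del: lift_subst simp: lift_subst[of 0, simplified] root.simps)

lemma surf_lift: "surf b M M' \<Longrightarrow> surf b (lift k M) (lift k M')"
  by (induction arbitrary: k rule: surf.induct) (auto intro: surf.intros root_lift)

lemma root_subst: "root b M M' \<Longrightarrow> b = Beta \<or> is_value N \<Longrightarrow> root b (subst M k N) (subst M' k N)"
  by (induction rule: root.induct) (auto simp: root.simps subst_subst[of 0 k, simplified, symmetric] intro: is_value_subst)

lemma surf_subst: "surf b M M' \<Longrightarrow> b = Beta \<or> is_value N \<Longrightarrow> surf b (subst M k N) (subst M' k N)"
  by (induction arbitrary: k N rule: surf.induct) (auto intro: surf.intros root_subst)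

lemma rtranclp_map: assumes "\<And>x y. R x y \<Longrightarrow> R (f x) (f y)" shows "R\<^sup>*\<^sup>* x y \<Longrightarrow> R\<^sup>*\<^sup>* (f x) (f y)"
  by (induction rule: rtranclp_induct) (auto intro: rtranclp.rtrancl_into_rtrancl assms)

lemma surfs_subst: "(surf b)\<^sup>*\<^sup>* M M' \<Longrightarrow> b = Beta \<or> is_value N \<Longrightarrow> (surf b)\<^sup>*\<^sup>* (subst M k N) (subst M' k N)"
  by (induction rule: rtranclp_induct) (auto intro: rtranclp.rtrancl_into_rtrancl surf_subst)

lemma surfs_lam: "(surf Beta)\<^sup>*\<^sup>* M M' \<Longrightarrow> (surf Beta)\<^sup>*\<^sup>* (Lam M) (Lam M')"
  by (rule rtranclp_map[where f=Lam]) (auto intro: surf.intros)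

lemma surfs_appl: "(surf b)\<^sup>*\<^sup>* M M' \<Longrightarrow> (surf b)\<^sup>*\<^sup>* (App M N) (App M' N)"
  by (rule rtranclp_map[where f="\<lambda>x. App x N"]) (auto intro: surf.intros)

lemma surfs_appr: "(surf BetaV)\<^sup>*\<^sup>* M M' \<Longrightarrow> (surf BetaV)\<^sup>*\<^sup>* (App N M) (App N M')"
  by (rule rtranclp_map[where f="\<lambda>x. App N x"]) (auto intro: surf.intros)

definition FP :: "calculus \<Rightarrow> 'o trm \<Rightarrow> 'o trm \<Rightarrow> bool" where
  "FP b X Y \<longleftrightarrow> (\<exists>Z. (surf b)\<^sup>*\<^sup>* X Z \<and> pint b Z Y)"

lemma FP_lift: "FP b N N' \<Longrightarrow> FP b (lift j N) (lift j N')"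
  unfolding FP_def using rtranclp_map[of "surf b" "lift j", OF surf_lift] pint_lift by blast

lemma value_par_pint: "par BetaV N N' \<Longrightarrow> is_value N \<Longrightarrow> pint BetaV N N'"
  by (cases rule: par.cases) (auto intro: pint.intros)

lemma FP_subst: "pint b L M' \<Longrightarrow> par b N N' \<Longrightarrow> b = Beta \<or> is_value N \<Longrightarrow> FP b N N'
   \<Longrightarrow> FP b (subst L k N) (subst M' k N')"
proof (induction arbitrary: k N N' rule: pint.induct)
  case (i_var b i)
  then show ?case by (auto simp: FP_def intro: pint.intros)
next
  case (i_lamB M M')
  have "FP Beta (lift 0 N) (lift 0 N')" using i_lamB.prems by (simp add: FP_lift)
  with i_lamB.IH[of "lift 0 N" "lift 0 N'" "Suc k"] i_lamB.prems
  obtain Z where "(surf Beta)\<^sup>*\<^sup>* (subst M (Suc k) (lift 0 N)) Z" "pint Beta Z (subst M' (Suc k) (lift 0 N'))"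
    by (auto simp: FP_def intro: par_lift)
  then show ?case unfolding FP_def by (auto intro!: exI[of _ "Lam Z"] surfs_lam pint.intros)
next
  case (i_lamV M M')
  then show ?case unfolding FP_def by (auto intro!: pint.intros par_subst par_lift)
next
  case (i_appB M M' P P')
  from i_appB.IH[of N N' k] i_appB.prems
  obtain Z where "(surf Beta)\<^sup>*\<^sup>* (subst M k N) Z" "pint Beta Z (subst M' k N')"
    by (auto simp: FP_def)
  then show ?case unfolding FP_def using i_appB
    by (auto intro!: exI[of _ "App Z (subst P k N)"] surfs_appl pint.intros par_subst)
next
  case (i_appV M M' P P')
  from i_appV.IH(1)[of N N' k] i_appV.prems
  obtain Z where Z: "(surf BetaV)\<^sup>*\<^sup>* (subst M k N) Z" "pint BetaV Z (subst M' k N')"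
    by (auto simp: FP_def)
  from i_appV.IH(2)[of N N' k] i_appV.prems
  obtain Z' where Z': "(surf BetaV)\<^sup>*\<^sup>* (subst P k N) Z'" "pint BetaV Z' (subst P' k N')"
    by (auto simp: FP_def)
  have "(surf BetaV)\<^sup>*\<^sup>* (App (subst M k N) (subst P k N)) (App Z Z')"
    using surfs_appl[OF Z(1)] surfs_appr[OF Z'(1)] by (meson rtranclp_trans)
  then show ?case unfolding FP_def using Z Z' by (auto intro!: pint.intros)
next
  case (i_op b Ms Ms' f)
  have "list_all2 (par b) (map (\<lambda>t. subst t k N) Ms) (map (\<lambda>t. subst t k N') Ms')"
    using i_op by (auto simp: list.rel_map elim!: list_all2_mono intro: par_subst)
  then show ?case unfolding FP_def by (auto intro!: pint.intros)
qed

lemma par_FP: "par b M M' \<Longrightarrow> FP b M M'"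
proof (induction rule: par.induct)
  case (p_var i)
  then show ?case by (auto simp: FP_def intro: pint.intros)
next
  case (p_lam M M')
  show ?case
  proof (cases b)
    case Beta
    then show ?thesis using p_lam unfolding FP_def by (auto intro!: surfs_lam pint.intros)
  next
    case BetaV
    then show ?thesis using p_lam unfolding FP_def by (auto intro!: pint.intros)
  qed
next
  case (p_app M M' N N')
  show ?case
  proof (cases b)
    case Beta
    then show ?thesis using p_app unfolding FP_def by (auto intro!: surfs_appl pint.intros)
  next
    case BetaV
    from p_app BetaV obtain Z Z' where Z: "(surf BetaV)\<^sup>*\<^sup>* M Z" "pint BetaV Z M'"
       "(surf BetaV)\<^sup>*\<^sup>* N Z'" "pint BetaV Z' N'" by (auto simp: FP_def)
    have "(surf BetaV)\<^sup>*\<^sup>* (App M N) (App Z Z')"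
      using surfs_appl[OF Z(1)] surfs_appr[OF Z(3)] by (meson rtranclp_trans)
    then show ?thesis using Z BetaV unfolding FP_def by (auto intro!: pint.intros)
  qed
next
  case (p_op Ms Ms' f)
  then show ?case unfolding FP_def by (auto intro!: pint.intros elim!: list_all2_mono)
next
  case (p_beta M M' N N')
  have r: "surf b (App (Lam M) N) (subst M 0 N)"
    apply (rule s_root)
    using p_beta(3) by (cases b) (auto intro: root.intros)
  from p_beta obtain Z where Z: "(surf b)\<^sup>*\<^sup>* M Z" "pint b Z M'" by (auto simp: FP_def)
  have "(surf b)\<^sup>*\<^sup>* (subst M 0 N) (subst Z 0 N)"
    using surfs_subst Z(1) p_beta(3) by blast
  moreover have "FP b (subst Z 0 N) (subst M' 0 N')"
    using FP_subst[OF Z(2)] p_beta by auto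
  ultimately show ?case using r unfolding FP_def
    by (metis (no_types, lifting) converse_rtranclp_into_rtranclp rtranclp_trans)
qed

inductive_cases pint_AppE: "pint b L (App K1 K2)"
inductive_cases pint_LamE: "pint b L (Lam K)"
inductive_cases pint_VarE: "pint b L (Var i)"

lemma pint_value: "pint b L K \<Longrightarrow> is_value K \<Longrightarrow> is_value L"
  by (cases rule: pint.cases) auto

lemma postpone: "surf b K K' \<Longrightarrow> pint b L K \<Longrightarrow> par b L K'"
proof (induction arbitrary: L rule: surf.induct)
  case (s_root b M M')
  then show ?case
  proof (cases rule: root.cases)
    case (beta P Q)
    with s_root.prems obtain L1 L2 where "L = App L1 L2" "pint Beta L1 (Lam P)" "par Beta L2 Q"
      by (auto elim: pint_AppE)
    then show ?thesis using beta
      by (auto elim!: pint_LamE intro!: par.p_beta dest: pint_par)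
  next
    case (betav Q P)
    with s_root.prems obtain L1 L2 where "L = App L1 L2" "pint BetaV L1 (Lam P)" "pint BetaV L2 Q"
      by (auto elim: pint_AppE)
    then show ?thesis using betav pint_value[of BetaV L2 Q]
      by (auto elim!: pint_LamE intro!: par.p_beta dest: pint_par)
  qed
next
  case (s_lam M M')
  then show ?case by (auto elim!: pint_LamE intro!: par.intros)
next
  case (s_appl b M M' N)
  then show ?case by (auto elim!: pint_AppE intro!: par.p_app dest: pint_par)
next
  case (s_appr N N' M)
  then show ?case by (auto elim!: pint_AppE intro!: par.p_app dest: pint_par)
qed

lemma PS: "(surf b)\<^sup>*\<^sup>* K K' \<Longrightarrow> pint b L K \<Longrightarrow> \<exists>L'. (surf b)\<^sup>*\<^sup>* L L' \<and> pint b L' K'"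
proof (induction arbitrary: L rule: rtranclp_induct)
  case base
  then show ?case by auto
next
  case (step y z)
  then obtain L1 where "(surf b)\<^sup>*\<^sup>* L L1" "pint b L1 y" by blast
  moreover from postpone[OF step(2) this(2)] par_FP obtain L2 where "(surf b)\<^sup>*\<^sup>* L1 L2" "pint b L2 z"
    unfolding FP_def by blast
  ultimately show ?case by (meson rtranclp_trans)
qed

lemma step_par: "step b M M' \<Longrightarrow> par b M M'"
proof (induction rule: step.induct)
  case (st_root b M M')
  then show ?case by (cases rule: root.cases) (auto intro!: par.intros par_refl)
next
  case (st_op b M M' f xs ys)
  then show ?case by (auto intro!: par.intros list_all2_appendI list.rel_refl_strong par_refl)
qed (auto intro: par.intros par_refl)

lemma factor: "(step b)\<^sup>*\<^sup>* M N \<Longrightarrow> \<exists>L. (surf b)\<^sup>*\<^sup>* M L \<and> (pint b)\<^sup>*\<^sup>* L N"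
proof (induction rule: converse_rtranclp_induct)
  case base
  then show ?case by auto
next
  case (step y z)
  then obtain L1 where L1: "(surf b)\<^sup>*\<^sup>* z L1" "(pint b)\<^sup>*\<^sup>* L1 N" by blast
  from par_FP[OF step_par[OF step(1)]] obtain X where X: "(surf b)\<^sup>*\<^sup>* y X" "pint b X z"
    unfolding FP_def by blast
  from PS[OF L1(1) X(2)] obtain X' where "(surf b)\<^sup>*\<^sup>* X X'" "pint b X' L1" by blast
  then show ?case using X L1 by (meson converse_rtranclp_into_rtranclp rtranclp_trans)
qed

lemma surf_step: "surf b M M' \<Longrightarrow> step b M M'"
  by (induction rule: surf.induct) (auto intro: step.intros)

lemma steps_lam: "(step b)\<^sup>*\<^sup>* M M' \<Longrightarrow> (step b)\<^sup>*\<^sup>* (Lam M) (Lam M')"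
  by (rule rtranclp_map[where f=Lam]) (auto intro: step.intros)

lemma steps_appl: "(step b)\<^sup>*\<^sup>* M M' \<Longrightarrow> (step b)\<^sup>*\<^sup>* (App M N) (App M' N)"
  by (rule rtranclp_map[where f="\<lambda>x. App x N"]) (auto intro: step.intros)

lemma steps_appr: "(step b)\<^sup>*\<^sup>* M M' \<Longrightarrow> (step b)\<^sup>*\<^sup>* (App N M) (App N M')"
  by (rule rtranclp_map[where f="\<lambda>x. App N x"]) (auto intro: step.intros)

lemma steps_app: "(step b)\<^sup>*\<^sup>* M M' \<Longrightarrow> (step b)\<^sup>*\<^sup>* N N' \<Longrightarrow> (step b)\<^sup>*\<^sup>* (App M N) (App M' N')"
  by (meson steps_appl steps_appr rtranclp_trans)

lemma steps_op1: "(step b)\<^sup>*\<^sup>* M M' \<Longrightarrow> (step b)\<^sup>*\<^sup>* (Op f (xs @ M # ys)) (Op f (xs @ M' # ys))"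
  by (rule rtranclp_map[where f="\<lambda>x. Op f (xs @ x # ys)"]) (auto intro: step.intros)

lemma steps_op_aux: "list_all2 (step b)\<^sup>*\<^sup>* As Bs \<Longrightarrow> (step b)\<^sup>*\<^sup>* (Op f (xs @ As)) (Op f (xs @ Bs))"
proof (induction arbitrary: xs rule: list_all2_induct)
  case Nil
  then show ?case by simp
next
  case (Cons a As b' Bs)
  have "(step b)\<^sup>*\<^sup>* (Op f (xs @ a # As)) (Op f (xs @ b' # As))" using Cons(1) by (rule steps_op1)
  moreover have "(step b)\<^sup>*\<^sup>* (Op f ((xs @ [b']) @ As)) (Op f ((xs @ [b']) @ Bs))" by (rule Cons.IH)
  ultimately show ?case by (simp add: rtranclp_trans)
qed

lemma steps_op: "list_all2 (step b)\<^sup>*\<^sup>* As Bs \<Longrightarrow> (step b)\<^sup>*\<^sup>* (Op f As) (Op f Bs)"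
  using steps_op_aux[of b As Bs f "[]"] by simp

lemma par_value: "par b N N' \<Longrightarrow> is_value N \<Longrightarrow> is_value N'"
  by (cases rule: par.cases) auto

lemma par_steps: "par b M M' \<Longrightarrow> (step b)\<^sup>*\<^sup>* M M'"
proof (induction rule: par.induct)
  case (p_op Ms Ms' f)
  then show ?case by (auto intro!: steps_op elim!: list_all2_mono)
next
  case (p_beta M M' N N')
  have "(step b)\<^sup>*\<^sup>* (App (Lam M) N) (App (Lam M') N')" using p_beta by (auto intro: steps_app steps_lam)
  moreover have "step b (App (Lam M') N') (subst M' 0 N')"
    using p_beta(3) par_value[OF p_beta(2)]
    by (cases b) (auto intro!: step.intros root.intros)
  ultimately show ?case by auto
qed (auto intro: steps_lam steps_app)

lemma pd_steps: "pd b M M' \<Longrightarrow> (step b)\<^sup>*\<^sup>* M M'"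
proof (induction rule: pd.induct)
  case (pd_op b f Ps Ps')
  then show ?case by (auto intro!: steps_op elim!: list_all2_mono)
qed (auto intro: steps_lam steps_app surf_step)

lemma rtranclp_sub: assumes "\<And>x y. R x y \<Longrightarrow> S\<^sup>*\<^sup>* x y" shows "R\<^sup>*\<^sup>* x y \<Longrightarrow> S\<^sup>*\<^sup>* x y"
  by (induction rule: rtranclp_induct) (auto dest: assms)

lemma normal_lam: "normal b (Lam P) \<Longrightarrow> normal b P"
  unfolding normal_def by (auto intro: step.intros)
lemma normal_app: "normal b (App P Q) \<Longrightarrow> normal b P \<and> normal b Q"
  unfolding normal_def by (auto intro: step.intros)
lemma normal_op: "normal b (Op f Ps) \<Longrightarrow> P \<in> set Ps \<Longrightarrow> normal b P"
  unfolding normal_def by (auto simp: in_set_conv_decomp intro: step.intros)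

lemma pd_normal: "pd b P Q \<Longrightarrow> normal b P \<Longrightarrow> Q = P"
  by (cases rule: pd.cases) (auto dest: surf_step simp: normal_def)

lemma normal_surf_normal: "normal b P \<Longrightarrow> surf_normal b P"
  by (auto simp: normal_def surf_normal_def dest: surf_step)

lemma step_to_value: "step b P P' \<Longrightarrow> is_value P' \<Longrightarrow> \<not> is_value P \<Longrightarrow> surf b P P'"
  by (cases rule: step.cases) (auto intro: surf.intros)

lemma step_to_lam: "step b P (Lam R) \<Longrightarrow> \<forall>R0. P \<noteq> Lam R0 \<Longrightarrow> surf b P (Lam R)"
  by (cases rule: step.cases) (auto intro: surf.intros)

inductive_cases surf_LamE: "surf b (Lam P) X"
inductive_cases surf_AppE: "surf b (App P Q) X"
inductive_cases surf_OpE: "surf b (Op f Ps) X"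
inductive_cases root_AppE: "root b (App P Q) X"

lemma surf_op_never: "\<not> surf b (Op f Ps) X"
  by (auto elim: surf_OpE root.cases)

lemma surf_App_iff: "surf b (App P Q) X \<longleftrightarrow> root b (App P Q) X \<or> (\<exists>P'. surf b P P' \<and> X = App P' Q)
   \<or> (b = BetaV \<and> (\<exists>Q'. surf BetaV Q Q' \<and> X = App P Q'))"
  by (auto elim: surf_AppE intro: surf.intros)

lemma root_App_ex: "(\<exists>X. root b (App P Q) X) \<longleftrightarrow> (\<exists>R. P = Lam R) \<and> (b = Beta \<or> is_value Q)"
  by (cases b) (auto elim: root_AppE intro: root.intros)

lemma surf_normal_App: "surf_normal b (App P Q) \<longleftrightarrow> \<not>((\<exists>R. P = Lam R) \<and> (b = Beta \<or> is_value Q))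
   \<and> surf_normal b P \<and> (b = BetaV \<longrightarrow> surf_normal b Q)"
  unfolding surf_normal_def surf_App_iff using root_App_ex[of b P Q] by blast

lemma surf_normal_Lam: "surf_normal b (Lam P) \<longleftrightarrow> (b = Beta \<longrightarrow> surf_normal b P)"
  unfolding surf_normal_def by (auto elim!: surf_LamE root.cases intro: surf.intros)

lemma surf_normal_Op: "surf_normal b (Op f Ps)"
  unfolding surf_normal_def by (auto simp: surf_op_never)

lemma surf_normal_step: "step b M M' \<Longrightarrow> surf_normal b M \<Longrightarrow> surf_normal b M'"
proof (induction rule: step.induct)
  case (st_root b M M')
  then show ?case by (auto simp: surf_normal_def intro: surf.intros)
next
  case (st_lam b M M')
  then show ?case by (auto simp: surf_normal_Lam)
next
  case (st_appl b M M' N)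
  have nM: "surf_normal b M" using st_appl.prems by (simp add: surf_normal_App)
  have lam: "\<exists>R0. M = Lam R0" if "M' = Lam R" for R
    using step_to_lam[of b M R] st_appl(1) nM that by (auto simp: surf_normal_def)
  show ?case using st_appl.prems st_appl.IH[OF nM] lam
    by (auto simp: surf_normal_App)
next
  case (st_appr b N N' M)
  show ?case
  proof (cases b)
    case Beta
    then show ?thesis using st_appr.prems by (simp add: surf_normal_App)
  next
    case BetaV
    have nN: "surf_normal b N" using st_appr.prems BetaV by (simp add: surf_normal_App)
    have v: "\<not> is_value N'" if "\<not> is_value N"
      using step_to_value[of b N N'] st_appr(1) nN that by (auto simp: surf_normal_def)
    show ?thesis using st_appr.prems st_appr.IH[OF nN] v BetaV
      by (auto simp: surf_normal_App)
  qed
next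
  case (st_op b M M' f xs ys)
  then show ?case by (auto simp: surf_normal_Op)
qed

lemma surf_normal_steps: "(step b)\<^sup>*\<^sup>* M M' \<Longrightarrow> surf_normal b M \<Longrightarrow> surf_normal b M'"
  by (induction rule: rtranclp_induct) (auto intro: surf_normal_step)

inductive_cases pint_AppE2: "pint b (App P Q) K"
inductive_cases pint_LamE2: "pint b (Lam P) K"

lemma pint_value_fwd: "pint b L K \<Longrightarrow> is_value L \<Longrightarrow> is_value K"
  by (cases rule: pint.cases) auto

lemma pint_reflect: "surf b L L' \<Longrightarrow> pint b L K \<Longrightarrow> \<exists>K'. surf b K K'"
proof (induction arbitrary: K rule: surf.induct)
  case (s_root b M M')
  then show ?case
  proof (cases rule: root.cases)
    case (beta P Q)
    then show ?thesis using s_root.prems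
      by (auto elim!: pint_AppE2 pint_LamE2 intro!: surf.intros root.intros)
  next
    case (betav Q P)
    then show ?thesis using s_root.prems
      by (auto elim!: pint_AppE2 pint_LamE2 intro!: surf.intros root.intros dest: pint_value_fwd)
  qed
next
  case (s_lam M M')
  then show ?case by (auto elim!: pint_AppE2 pint_LamE2 intro: surf.intros)
next
  case (s_appl b M M' N)
  then show ?case by (auto elim!: pint_AppE2 pint_LamE2 intro: surf.intros)
next
  case (s_appr N N' M)
  then show ?case by (auto elim!: pint_AppE2 pint_LamE2 intro: surf.intros)
qed

lemma pints_surf_normal: "(pint b)\<^sup>*\<^sup>* L K \<Longrightarrow> surf_normal b K \<Longrightarrow> surf_normal b L"
  by (induction rule: converse_rtranclp_induct) (auto simp: surf_normal_def dest: pint_reflect)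

lemma surfs_pds: "(surf b)\<^sup>*\<^sup>* M L \<Longrightarrow> (pd b)\<^sup>*\<^sup>* M L"
  by (induction rule: rtranclp_induct) (simp, meson pd_surf rtranclp.rtrancl_into_rtrancl)

inductive_cases pint_OpE: "pint b L (Op f Ns)"

lemma pints_Var: "(pint b)\<^sup>*\<^sup>* L K \<Longrightarrow> K = Var i \<Longrightarrow> L = Var i"
  by (induction arbitrary: i rule: rtranclp_induct) (auto elim: pint_VarE)

lemma pints_Lam: "(pint b)\<^sup>*\<^sup>* L K \<Longrightarrow> K = Lam N1 \<Longrightarrow> \<exists>L1. L = Lam L1 \<and> (step b)\<^sup>*\<^sup>* L1 N1"
proof (induction arbitrary: N1 rule: rtranclp_induct)
  case base
  then show ?case by auto
next
  case (step y z)
  from step(2) step(4) have "pint b y (Lam N1)" by simp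
  then obtain y1 where y1: "y = Lam y1" "par b y1 N1"
    using pint_LamE[OF \<open>pint b y (Lam N1)\<close>] pint_par by metis
  with step.IH obtain L1 where "L = Lam L1" "(step b)\<^sup>*\<^sup>* L1 y1" by blast
  moreover have "(step b)\<^sup>*\<^sup>* L1 N1" using calculation(2) y1(2) par_steps by (meson rtranclp_trans)
  ultimately show ?case by blast
qed

lemma pints_App: "(pint b)\<^sup>*\<^sup>* L K \<Longrightarrow> K = App N1 N2 \<Longrightarrow>
   \<exists>L1 L2. L = App L1 L2 \<and> (step b)\<^sup>*\<^sup>* L1 N1 \<and> (step b)\<^sup>*\<^sup>* L2 N2"
proof (induction arbitrary: N1 N2 rule: rtranclp_induct)
  case base
  then show ?case by auto
next
  case (step y z)
  from step(2) step(4) have "pint b y (App N1 N2)" by simp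
  then obtain y1 y2 where y1: "y = App y1 y2" "par b y1 N1" "par b y2 N2"
    using pint_AppE[OF \<open>pint b y (App N1 N2)\<close>] pint_par by metis
  with step.IH obtain L1 L2 where "L = App L1 L2" "(step b)\<^sup>*\<^sup>* L1 y1" "(step b)\<^sup>*\<^sup>* L2 y2" by blast
  moreover have "(step b)\<^sup>*\<^sup>* L1 N1" using calculation(2) y1(2) par_steps by (meson rtranclp_trans)
  moreover have "(step b)\<^sup>*\<^sup>* L2 N2" using calculation(3) y1(3) par_steps by (meson rtranclp_trans)
  ultimately show ?case by blast
qed

lemma pints_Op: "(pint b)\<^sup>*\<^sup>* L K \<Longrightarrow> K = Op f Ns \<Longrightarrow>
   \<exists>Ls. L = Op f Ls \<and> list_all2 (step b)\<^sup>*\<^sup>* Ls Ns"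
proof (induction arbitrary: Ns rule: rtranclp_induct)
  case base
  then show ?case by (auto intro!: list.rel_refl_strong)
next
  case (step y z)
  from step(2) step(4) have "pint b y (Op f Ns)" by simp
  then obtain ys where y1: "y = Op f ys" "list_all2 (par b) ys Ns"
    using pint_OpE[OF \<open>pint b y (Op f Ns)\<close>] by metis
  with step.IH obtain Ls where Ls: "L = Op f Ls" "list_all2 (step b)\<^sup>*\<^sup>* Ls ys" by blast
  have A: "list_all2 (step b)\<^sup>*\<^sup>* ys Ns" by (rule list_all2_mono[OF y1(2)]) (rule par_steps)
  have tr: "\<And>a b' c. (step b)\<^sup>*\<^sup>* a b' \<Longrightarrow> (step b)\<^sup>*\<^sup>* b' c \<Longrightarrow> (step b)\<^sup>*\<^sup>* a c"
    by (rule rtranclp_trans)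
  have "list_all2 (step b)\<^sup>*\<^sup>* Ls Ns"
    by (rule list_all2_trans[OF tr Ls(2) A])
  then show ?case using Ls by blast
qed

lemma lam_lift: "(pd b ^^ n) P P' \<Longrightarrow> surf_normal b (Lam P) \<Longrightarrow> (pd b ^^ n) (Lam P) (Lam P')"
proof (induction n arbitrary: P)
  case 0
  then show ?case by simp
next
  case (Suc n)
  from relpowp_Suc_D2[OF Suc.prems(1)] obtain P1 where P1: "pd b P P1" "(pd b ^^ n) P1 P'" by blast
  have st: "pd b (Lam P) (Lam P1)"
  proof (cases "normal b (Lam P)")
    case True
    then have "P1 = P" using pd_normal[OF P1(1)] normal_lam by blast
    then show ?thesis using True pd_nf by simp
  next
    case False
    show ?thesis by (rule pd_lam[OF Suc.prems(2) False P1(1)])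
  qed
  have "surf_normal b (Lam P1)" using surf_normal_steps[OF pd_steps[OF st] Suc.prems(2)] .
  with Suc.IH[OF P1(2)] st show ?case by (meson relpowp_Suc_I2)
qed

lemma app_lift: "(pd b ^^ n) P P' \<Longrightarrow> (pd b ^^ n) Q Q' \<Longrightarrow> surf_normal b (App P Q) \<Longrightarrow> (pd b ^^ n) (App P Q) (App P' Q')"
proof (induction n arbitrary: P Q)
  case 0
  then show ?case by simp
next
  case (Suc n)
  from relpowp_Suc_D2[OF Suc.prems(1)] obtain P1 where P1: "pd b P P1" "(pd b ^^ n) P1 P'" by blast
  from relpowp_Suc_D2[OF Suc.prems(2)] obtain Q1 where Q1: "pd b Q Q1" "(pd b ^^ n) Q1 Q'" by blast
  have st: "pd b (App P Q) (App P1 Q1)"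
  proof (cases "normal b (App P Q)")
    case True
    then have "P1 = P" "Q1 = Q" using pd_normal[OF P1(1)] pd_normal[OF Q1(1)] normal_app by blast+
    then show ?thesis using True pd_nf by simp
  next
    case False
    show ?thesis by (rule pd_app[OF Suc.prems(3) False P1(1) Q1(1)])
  qed
  have "surf_normal b (App P1 Q1)" using surf_normal_steps[OF pd_steps[OF st] Suc.prems(3)] .
  with Suc.IH[OF P1(2) Q1(2)] st show ?case by (meson relpowp_Suc_I2)
qed

lemma list_all2_relpow_split: "list_all2 (R ^^ Suc n) xs zs \<Longrightarrow> \<exists>ys. list_all2 R xs ys \<and> list_all2 (R ^^ n) ys zs"
proof (induction rule: list_all2_induct)
  case Nil
  then show ?case by auto
next
  case (Cons x xs z zs)
  from relpowp_Suc_D2[OF Cons(1)] obtain y where "R x y" "(R ^^ n) y z" by blast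
  with Cons.IH show ?case by auto
qed

lemma pd_list_normal: "list_all2 (pd b) Ps Ps1 \<Longrightarrow> (\<forall>P\<in>set Ps. normal b P) \<Longrightarrow> Ps1 = Ps"
  by (induction rule: list_all2_induct) (auto dest: pd_normal)

lemma op_lift: "list_all2 (pd b ^^ n) Ps Ps' \<Longrightarrow> (pd b ^^ n) (Op f Ps) (Op f Ps')"
proof (induction n arbitrary: Ps)
  case 0
  then have "Ps' = Ps" by (simp add: list.rel_eq)
  then show ?case by simp
next
  case (Suc n)
  from list_all2_relpow_split[OF Suc.prems] obtain Ps1 where P1: "list_all2 (pd b) Ps Ps1" "list_all2 (pd b ^^ n) Ps1 Ps'" by blast
  have st: "pd b (Op f Ps) (Op f Ps1)"
  proof (cases "normal b (Op f Ps)")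
    case True
    have "\<forall>P\<in>set Ps. normal b P"
    proof
      fix P assume "P \<in> set Ps" then show "normal b P" by (rule normal_op[OF True])
    qed
    then have "Ps1 = Ps" using pd_list_normal[OF P1(1)] by blast
    then show ?thesis using True pd_nf by simp
  next
    case False
    show ?thesis by (rule pd_op[OF surf_normal_Op False P1(1)])
  qed
  with Suc.IH[OF P1(2)] show ?case by (meson relpowp_Suc_I2)
qed

lemma pd_pow_normal: "normal b P \<Longrightarrow> (pd b ^^ m) P P"
  by (induction m) (auto intro: relpowp_Suc_I pd_nf)

lemma pad: "(pd b)\<^sup>*\<^sup>* P P' \<Longrightarrow> normal b P' \<Longrightarrow> \<exists>k. \<forall>n\<ge>k. (pd b ^^ n) P P'"
proof -
  assume a: "(pd b)\<^sup>*\<^sup>* P P'" "normal b P'"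
  then obtain k where k: "(pd b ^^ k) P P'" by (auto simp: rtranclp_power)
  have "(pd b ^^ n) P P'" if "n \<ge> k" for n
  proof -
    have "(pd b ^^ (k + (n - k))) P P'" unfolding relpowp_add using k pd_pow_normal[OF a(2)] by blast
    then show ?thesis using that by simp
  qed
  then show ?thesis by blast
qed

lemma pad_list: "list_all2 (\<lambda>P P'. (pd b)\<^sup>*\<^sup>* P P' \<and> normal b P') Ps Ps' \<Longrightarrow> \<exists>k. \<forall>n\<ge>k. list_all2 (pd b ^^ n) Ps Ps'"
proof (induction rule: list_all2_induct)
  case Nil
  then show ?case by auto
next
  case (Cons x xs y ys)
  from pad[of b x y] Cons(1) obtain k1 where k1: "\<forall>n\<ge>k1. (pd b ^^ n) x y" by blast
  from Cons.IH obtain k2 where k2: "\<forall>n\<ge>k2. list_all2 (pd b ^^ n) xs ys" by blast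
  show ?case using k1 k2 by (auto intro!: exI[of _ "max k1 k2"])
qed

lemma main_dir: "normal b N \<Longrightarrow> (step b)\<^sup>*\<^sup>* M N \<Longrightarrow> (pd b)\<^sup>*\<^sup>* M N"
proof (induction N arbitrary: M)
  case (Var i)
  from factor[OF Var(2)] obtain L where L: "(surf b)\<^sup>*\<^sup>* M L" "(pint b)\<^sup>*\<^sup>* L (Var i)" by blast
  have "(pd b)\<^sup>*\<^sup>* M L" using L(1) by (rule surfs_pds)
  then show ?case using pints_Var[OF L(2)] by simp
next
  case (Lam N1)
  from factor[OF Lam(3)] obtain L where L: "(surf b)\<^sup>*\<^sup>* M L" "(pint b)\<^sup>*\<^sup>* L (Lam N1)" by blast
  have hML: "(pd b)\<^sup>*\<^sup>* M L" using L(1) by (rule surfs_pds)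
  have sn: "surf_normal b L" using pints_surf_normal[OF L(2)] normal_surf_normal[OF Lam(2)] .
  from pints_Lam[OF L(2)] obtain L1 where L1: "L = Lam L1" "(step b)\<^sup>*\<^sup>* L1 N1" by blast
  have nN1: "normal b N1" using Lam(2) normal_lam by blast
  have "(pd b)\<^sup>*\<^sup>* L1 N1" using Lam.IH[OF nN1 L1(2)] .
  then obtain k where "\<forall>n\<ge>k. (pd b ^^ n) L1 N1" using pad[OF _ nN1] by blast
  then have "(pd b ^^ k) L1 N1" by simp
  from lam_lift[OF this] sn L1(1) have "(pd b)\<^sup>*\<^sup>* L (Lam N1)" by (auto dest: relpowp_imp_rtranclp)
  then show ?case using hML by (meson rtranclp_trans)
next
  case (App N1 N2)
  from factor[OF App(4)] obtain L where L: "(surf b)\<^sup>*\<^sup>* M L" "(pint b)\<^sup>*\<^sup>* L (App N1 N2)" by blast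
  have hML: "(pd b)\<^sup>*\<^sup>* M L" using L(1) by (rule surfs_pds)
  have sn: "surf_normal b L" using pints_surf_normal[OF L(2)] normal_surf_normal[OF App(3)] .
  from pints_App[OF L(2)] obtain L1 L2 where L1: "L = App L1 L2" "(step b)\<^sup>*\<^sup>* L1 N1" "(step b)\<^sup>*\<^sup>* L2 N2" by blast
  have nN: "normal b N1" "normal b N2" using App(3) normal_app by blast+
  have "(pd b)\<^sup>*\<^sup>* L1 N1" using App.IH(1)[OF nN(1) L1(2)] .
  then obtain k1 where k1: "\<forall>n\<ge>k1. (pd b ^^ n) L1 N1" using pad[OF _ nN(1)] by blast
  have "(pd b)\<^sup>*\<^sup>* L2 N2" using App.IH(2)[OF nN(2) L1(3)] .
  then obtain k2 where k2: "\<forall>n\<ge>k2. (pd b ^^ n) L2 N2" using pad[OF _ nN(2)] by blast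
  have "(pd b ^^ max k1 k2) L1 N1" "(pd b ^^ max k1 k2) L2 N2" using k1 k2 by auto
  from app_lift[OF this] sn L1(1) have "(pd b)\<^sup>*\<^sup>* L (App N1 N2)" by (auto dest: relpowp_imp_rtranclp)
  then show ?case using hML by (meson rtranclp_trans)
next
  case (Op f Ns)
  from factor[OF Op(3)] obtain L where L: "(surf b)\<^sup>*\<^sup>* M L" "(pint b)\<^sup>*\<^sup>* L (Op f Ns)" by blast
  have hML: "(pd b)\<^sup>*\<^sup>* M L" using L(1) by (rule surfs_pds)
  from pints_Op[OF L(2)] obtain Ls where Ls: "L = Op f Ls" "list_all2 (step b)\<^sup>*\<^sup>* Ls Ns" by blast
  have "list_all2 (\<lambda>P P'. (pd b)\<^sup>*\<^sup>* P P' \<and> normal b P') Ls Ns"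
  proof -
    have len: "length Ls = length Ns" using Ls(2) by (rule list_all2_lengthD)
    have "(pd b)\<^sup>*\<^sup>* (Ls ! i) (Ns ! i) \<and> normal b (Ns ! i)" if i: "i < length Ls" for i
    proof -
      have st: "(step b)\<^sup>*\<^sup>* (Ls ! i) (Ns ! i)" using Ls(2) i by (rule list_all2_nthD)
      have mem: "Ns ! i \<in> set Ns" using i len by simp
      have n: "normal b (Ns ! i)" using normal_op[OF Op(2) mem] .
      show ?thesis using Op.IH[OF mem n st] n by blast
    qed
    then show ?thesis using len by (simp add: list_all2_conv_all_nth)
  qed
  from pad_list[OF this] obtain k where "list_all2 (pd b ^^ k) Ls Ns" by blast
  from op_lift[OF this] Ls(1) have "(pd b)\<^sup>*\<^sup>* L (Op f Ns)" by (auto dest: relpowp_imp_rtranclp)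
  then show ?case using hML by (meson rtranclp_trans)
qed

lemma pds_steps: "(pd b)\<^sup>*\<^sup>* M N \<Longrightarrow> (step b)\<^sup>*\<^sup>* M N"
proof (induction rule: rtranclp_induct)
  case base
  then show ?case by simp
next
  case (step y z)
  from pd_steps[OF step(2)] step(3) show ?case by (meson rtranclp_trans)
qed

theorem mainTheorem15:
  fixes b :: calculus and M N :: "'o trm"
  assumes "normal b N"
  shows "(step b)\<^sup>*\<^sup>* M N \<longleftrightarrow> (pd b)\<^sup>*\<^sup>* M N"
proof
  assume "(step b)\<^sup>*\<^sup>* M N"
  then show "(pd b)\<^sup>*\<^sup>* M N" by (rule main_dir[OF assms])
next
  assume "(pd b)\<^sup>*\<^sup>* M N"
  then show "(step b)\<^sup>*\<^sup>* M N" by (rule pds_steps)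
qed

end
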